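(* Let $\nu\ge1$, let $\mathbf{F}_Q\in\mathbb{R}^{\nu\times\nu}$ be symmetric positive semidefinite, $\eta>0$, $\tilde{\mathbf{F}}_Q^{-1}:=(\mathbf{F}_Q+\eta\,\mathrm{Id}_\nu)^{-1}$, and $\underline g\in\mathbb{R}^\nu$. Let $\mathcal H$ be a Hermitian operator on $N$ qubits, $d=2^N$, and let $f_F,f_g>0$ be constants. Define the error-propagation coefficients $a_{kl}:=\sum_{i,j=1}^{\nu}[\tilde{\mathbf{F}}_Q^{-1}]_{ik}^2[\tilde{\mathbf{F}}_Q^{-1}]_{lj}^2\,g_l^2$ and $b_l:=\sum_{k=1}^\nu [\tilde{\mathbf{F}}_Q^{-1}]_{kl}^2$. Suppose each entry $[\mathbf{F}_Q]_{kl}$ is estimated from independent single-shot measurements with single-shot variance $V_{kl}\le f_F$, and each entry $g_l$ from independent single-shot measurements with single-shot variance $W_l\le \mathrm{Spc}[\mathcal H]\,f_g$. Suppose $N_F$ measurements are distributed uniformly over the $\nu^2$ matrix entries ($N_F/\nu^2$ each) and $N_g$ measurements uniformly over the $\nu$ gradient entries ($N_g/\nu$ each), so that the squared error of $\underline v=\tilde{\mathbf{F}}_Q^{-1}\underline g$ is $\epsilon^2=\epsilon_F^2+\epsilon_g^2$ with $\epsilon_F^2=\frac{\nu^2}{N_F}\sum_{k,l}a_{kl}V_{kl}$ and $\epsilon_g^2=\frac{\nu}{N_g}\sum_l b_lW_l$. Given $\epsilon>0$, let $N_F$ and $N_g$ be the numbers of measurements for which $\epsilon_F^2=\epsilon^2/2$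 and $\epsilon_g^2=\epsilon^2/2$ (so the total precision is $\epsilon$ at total cost $N_F+N_g$). Then $$N_F\le 2\,\epsilon^{-2}\nu^4\,\mathrm{Spc}[\tilde{\mathbf{F}}_Q^{-1}]^2\,\lVert g\rVert_\infty^2\,f_F,\qquad N_g\le 2\,\epsilon^{-2}\nu^2\,\mathrm{Spc}[\tilde{\mathbf{F}}_Q^{-1}]\,\mathrm{Spc}[\mathcal H]\,f_g.$$
   Context: For $A\in\mathbb{C}^{m\times m}$, $\mathrm{Spc}[A]:=\lVert A\rVert_F^2/m$ is the average of the squared singular values, where $\lVert\cdot\rVert_F$ is the Hilbert–Schmidt (Frobenius) norm; in particular $\mathrm{Spc}[\mathcal H]=\mathrm{Tr}[\mathcal H^2]/d$. $\lVert g\rVert_\infty=\max_l|g_l|$. In the paper's application $\mathbf{F}_Q$ is the quantum Fisher information matrix of a parametrised quantum state, $\underline g$ is the gradient of the energy $\mathrm{Tr}[\rho(\underline\theta)\mathcal H]$, and $f_F,f_g$ are setup-dependent constants bounding single-shot variances; the error model above is the paper's first-order error-propagation formula for $\epsilon^2=\sum_k\mathrm{Var}[v_k]$. *)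

theory Defs
  imports "HOL-Analysis.Analysis"
begin

definition hermitian_mat :: "complex^'m^'m \<Rightarrow> bool" where
  "hermitian_mat H \<longleftrightarrow> (\<forall>i j. H $ i $ j = cnj (H $ j $ i))"

definition spc :: "('a::real_normed_vector)^'m^'m \<Rightarrow> real" where
  "spc A = (\<Sum>i\<in>UNIV. \<Sum>j\<in>UNIV. (norm (A $ i $ j))^2) / real CARD('m)"

definition reg_inv :: "real^'n^'n \<Rightarrow> real \<Rightarrow> real^'n^'n" where
  "reg_inv F \<eta> = matrix_inv (F + \<eta> *\<^sub>R mat 1)"

definition coef_a :: "real^'n^'n \<Rightarrow> real^'n \<Rightarrow> 'n \<Rightarrow> 'n \<Rightarrow> real" where
  "coef_a Fi g k l = (\<Sum>i\<in>UNIV. \<Sum>j\<in>UNIV. (Fi $ i $ k)^2 * (Fi $ l $ j)^2 * (g $ l)^2)"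

definition coef_b :: "real^'n^'n \<Rightarrow> 'n \<Rightarrow> real" where
  "coef_b Fi l = (\<Sum>k\<in>UNIV. (Fi $ k $ l)^2)"

end

theory Submission
  imports Defs
begin

theorem theorem1:
  fixes F :: "real^'n^'n" and \<eta> :: real and g :: "real^'n"
    and H :: "complex^'m^'m" and N :: nat and fF fg :: real
    and V :: "'n \<Rightarrow> 'n \<Rightarrow> real" and W :: "'n \<Rightarrow> real"
    and NF Ng \<epsilon> :: real
  assumes symF: "transpose F = F"
    and psdF: "\<forall>x. 0 \<le> x \<bullet> (F *v x)"
    and eta: "\<eta> > 0"
    and herm: "hermitian_mat H"
    and dimH: "CARD('m) = 2 ^ N"
    and fF: "fF > 0" and fg: "fg > 0"
    and V: "\<forall>k l. 0 \<le> V k l \<and> V k l \<le> fF"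
    and W: "\<forall>l. 0 \<le> W l \<and> W l \<le> spc H * fg"
    and eps: "\<epsilon> > 0"
    and NF: "NF > 0" and Ng: "Ng > 0"
    and errF: "(real CARD('n))^2 / NF *
                 (\<Sum>k\<in>UNIV. \<Sum>l\<in>UNIV. coef_a (reg_inv F \<eta>) g k l * V k l) = \<epsilon>^2 / 2"
    and errg: "real CARD('n) / Ng *
                 (\<Sum>l\<in>UNIV. coef_b (reg_inv F \<eta>) l * W l) = \<epsilon>^2 / 2"
  shows "NF \<le> 2 / \<epsilon>^2 * (real CARD('n))^4 * (spc (reg_inv F \<eta>))^2 * (infnorm g)^2 * fF
       \<and> Ng \<le> 2 / \<epsilon>^2 * (real CARD('n))^2 * spc (reg_inv F \<eta>) * spc H * fg"
proof -
  define Fi where "Fi = reg_inv F \<eta>"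
  define n where "n = real CARD('n)"
  define A where "A k = (\<Sum>i\<in>UNIV. (Fi $ i $ k)^2)" for k
  define B where "B l = (\<Sum>j\<in>UNIV. (Fi $ l $ j)^2)" for l
  define S where "S = (\<Sum>i\<in>UNIV. \<Sum>j\<in>UNIV. (Fi $ i $ j)^2)"
  have npos: "n > 0" unfolding n_def by simp
  have spcFi: "spc Fi = S / n" unfolding spc_def S_def n_def by simp
  have SA: "(\<Sum>k\<in>UNIV. A k) = S" unfolding A_def S_def by (rule sum.swap)
  have SB: "(\<Sum>l\<in>UNIV. B l) = S" unfolding B_def S_def by simp
  have A0: "A k \<ge> 0" for k unfolding A_def by (simp add: sum_nonneg)
  have B0: "B l \<ge> 0" for l unfolding B_def by (simp add: sum_nonneg)
  have ca: "coef_a Fi g k l = A k * B l * (g $ l)^2" for k l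
    unfolding coef_a_def A_def B_def by (simp add: sum_distrib_left sum_distrib_right mult.assoc, rule sum.swap)
  have gl: "(g $ l)^2 \<le> (infnorm g)^2" for l
    by (metis abs_ge_zero component_le_infnorm_cart power2_abs power_mono)
  have trm: "coef_a Fi g k l * V k l \<le> A k * B l * ((infnorm g)^2 * fF)" for k l
  proof -
    have "coef_a Fi g k l * V k l = (A k * B l) * ((g $ l)^2 * V k l)" by (simp add: ca)
    also have "\<dots> \<le> (A k * B l) * ((infnorm g)^2 * fF)"
      apply (rule mult_left_mono)
       apply (rule mult_mono[OF gl]) using V A0 B0 by auto
    finally show ?thesis .
  qed
  have X: "(\<Sum>k\<in>UNIV. \<Sum>l\<in>UNIV. coef_a Fi g k l * V k l) \<le> S * S * ((infnorm g)^2 * fF)"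
  proof -
    have "(\<Sum>k\<in>UNIV. \<Sum>l\<in>UNIV. coef_a Fi g k l * V k l) \<le> (\<Sum>k\<in>UNIV. \<Sum>l\<in>UNIV. A k * B l * ((infnorm g)^2 * fF))"
      by (intro sum_mono trm)
    also have "\<dots> = (\<Sum>k\<in>UNIV. A k) * (\<Sum>l\<in>UNIV. B l) * ((infnorm g)^2 * fF)"
      by (simp add: sum_distrib_left sum_distrib_right, rule sum.swap)
    finally show ?thesis using SA SB by simp
  qed
  have cb: "coef_b Fi l * W l \<le> coef_b Fi l * (spc H * fg)" for l
    apply (rule mult_left_mono) using W by (auto simp: coef_b_def sum_nonneg)
  have Y: "(\<Sum>l\<in>UNIV. coef_b Fi l * W l) \<le> S * (spc H * fg)"
  proof -
    have "(\<Sum>l\<in>UNIV. coef_b Fi l * W l) \<le> (\<Sum>l\<in>UNIV. coef_b Fi l * (spc H * fg))"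
      by (intro sum_mono cb)
    also have "\<dots> = (\<Sum>l\<in>UNIV. coef_b Fi l) * (spc H * fg)" by (simp add: sum_distrib_right)
    also have "(\<Sum>l\<in>UNIV. coef_b Fi l) = S" unfolding coef_b_def S_def by (rule sum.swap)
    finally show ?thesis .
  qed
  have eF: "n^2 / NF * (\<Sum>k\<in>UNIV. \<Sum>l\<in>UNIV. coef_a Fi g k l * V k l) = \<epsilon>^2 / 2"
    using errF unfolding Fi_def n_def .
  have eg: "n / Ng * (\<Sum>l\<in>UNIV. coef_b Fi l * W l) = \<epsilon>^2 / 2"
    using errg unfolding Fi_def n_def .
  have e2: "\<epsilon>^2 > 0" using eps by simp
  have NFeq: "NF = 2 / \<epsilon>^2 * n^2 * (\<Sum>k\<in>UNIV. \<Sum>l\<in>UNIV. coef_a Fi g k l * V k l)"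
    using eF NF e2 by (simp add: field_simps)
  have Ngeq: "Ng = 2 / \<epsilon>^2 * n * (\<Sum>l\<in>UNIV. coef_b Fi l * W l)"
    using eg Ng e2 by (simp add: field_simps)
  have S_eq: "S = n * spc Fi" using spcFi npos by simp
  have c1: "2 / \<epsilon>^2 * n^2 \<ge> 0" using e2 by simp
  have c2: "2 / \<epsilon>^2 * n \<ge> 0" using e2 npos by simp
  have "NF \<le> 2 / \<epsilon>^2 * n^2 * (S * S * ((infnorm g)^2 * fF))"
    unfolding NFeq by (rule mult_left_mono[OF X c1])
  also have "\<dots> = 2 / \<epsilon>^2 * n^4 * (spc Fi)^2 * (infnorm g)^2 * fF"
    unfolding S_eq by (simp add: power2_eq_square power4_eq_xxxx mult_ac)
  finally have r1: "NF \<le> 2 / \<epsilon>^2 * n^4 * (spc Fi)^2 * (infnorm g)^2 * fF" .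
  have "Ng \<le> 2 / \<epsilon>^2 * n * (S * (spc H * fg))"
    unfolding Ngeq by (rule mult_left_mono[OF Y c2])
  also have "\<dots> = 2 / \<epsilon>^2 * n^2 * spc Fi * spc H * fg"
    unfolding S_eq by (simp add: power2_eq_square mult_ac)
  finally have r2: "Ng \<le> 2 / \<epsilon>^2 * n^2 * spc Fi * spc H * fg" .
  show ?thesis using r1 r2 unfolding Fi_def n_def by simp
qed

end
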